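(* Let $H$ be an $\mathcal H$-class of $\mathcal{OR}_n$ containing an idempotent of rank $k$. If $k=n$ then $H=W'$, and if $k\in\{1,\dots,m\}$ then $H$ is isomorphic (as a group) to the symmetric group $S_k$.
   Context: Let $m\ge 1$, $n=2m$, $\mathbf n=\{1,\dots,n\}$, $\theta(i)=n+1-i$, written $\bar i$. A proper subset $I\subset\mathbf n$ is admissible if $I\cap\theta(I)=\emptyset$; $\mathbf n$ and $\emptyset$ are also admissible. For an injective partial map $\sigma$ of $\mathbf n$, $I(\sigma)$ is its domain, $J(\sigma)$ its image, $\mathrm{rk}(\sigma)=|I(\sigma)|$; products are compositions of partial maps. $W=\{\sigma\in S_n:\sigma(\bar i)=\overline{\sigma(i)}\ \forall i\}$, $W'=\{\sigma\in W:|\sigma(\{1,\dots,m\})\cap\{m+1,\dots,n\}|\text{ even}\}$. An admissible $m$-subset is of type I if it contains an even number of elements $>m$, type II otherwise. $\mathcal{OR}_n$ consists of the injective partial maps $\sigma$ with: $\mathrm{rk}(\sigma)<m$ and $I(\sigma),J(\sigma)$ admissible; or $\mathrm{rk}(\sigma)=m$ and $I(\sigma),J(\sigma)$ admissible of the same type; or $\sigma\in W'$. $\mathcal H$ is Green's $\mathcal H$-relation on the monoid $\mathcal{OR}_n$. *)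

theory Defs
  imports Main "HOL-Algebra.Sym_Groups"
begin

text \<open>Partial maps of the set n = 1..n are represented as nat to nat option;
  the domain is dom, the image is ran.  Products are compositions of partial maps
  (s * t = s after t, i.e. map_comp).\<close>

definition theta :: "nat \<Rightarrow> nat \<Rightarrow> nat" where
  "theta n i = n + 1 - i"

definition admissible :: "nat \<Rightarrow> nat set \<Rightarrow> bool" where
  "admissible n I \<longleftrightarrow> I = {1..n} \<or> I = {} \<or>
     (I \<subset> {1..n} \<and> I \<inter> theta n ` I = {})"

definition pinj :: "nat \<Rightarrow> (nat \<Rightarrow> nat option) \<Rightarrow> bool" where
  "pinj n s \<longleftrightarrow> dom s \<subseteq> {1..n} \<and> ran s \<subseteq> {1..n} \<and> inj_on s (dom s)"

definition rk :: "(nat \<Rightarrow> nat option) \<Rightarrow> nat" where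
  "rk s = card (dom s)"

definition Wgrp :: "nat \<Rightarrow> (nat \<Rightarrow> nat option) set" where
  "Wgrp m = {s. pinj (2*m) s \<and> dom s = {1..2*m} \<and>
      (\<forall>i\<in>{1..2*m}. s (theta (2*m) i) = map_option (theta (2*m)) (s i))}"

definition Wprime :: "nat \<Rightarrow> (nat \<Rightarrow> nat option) set" where
  "Wprime m = {s \<in> Wgrp m. even (card (ran (s |` {1..m}) \<inter> {m+1..2*m}))}"

definition typeI :: "nat \<Rightarrow> nat set \<Rightarrow> bool" where
  "typeI m I \<longleftrightarrow> even (card (I \<inter> {m+1..2*m}))"

definition ORn :: "nat \<Rightarrow> (nat \<Rightarrow> nat option) set" where
  "ORn m = {s. pinj (2*m) s \<and>
      ((rk s < m \<and> admissible (2*m) (dom s) \<and> admissible (2*m) (ran s)) \<or>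
       (rk s = m \<and> admissible (2*m) (dom s) \<and> admissible (2*m) (ran s) \<and>
          (typeI m (dom s) \<longleftrightarrow> typeI m (ran s))) \<or>
       s \<in> Wprime m)}"

definition greenR :: "nat \<Rightarrow> (nat \<Rightarrow> nat option) \<Rightarrow> (nat \<Rightarrow> nat option) \<Rightarrow> bool" where
  "greenR m a b \<longleftrightarrow> (\<exists>x\<in>ORn m. b = a \<circ>\<^sub>m x) \<and> (\<exists>y\<in>ORn m. a = b \<circ>\<^sub>m y)"

definition greenL :: "nat \<Rightarrow> (nat \<Rightarrow> nat option) \<Rightarrow> (nat \<Rightarrow> nat option) \<Rightarrow> bool" where
  "greenL m a b \<longleftrightarrow> (\<exists>x\<in>ORn m. b = x \<circ>\<^sub>m a) \<and> (\<exists>y\<in>ORn m. a = y \<circ>\<^sub>m b)"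

definition greenH :: "nat \<Rightarrow> (nat \<Rightarrow> nat option) \<Rightarrow> (nat \<Rightarrow> nat option) \<Rightarrow> bool" where
  "greenH m a b \<longleftrightarrow> greenR m a b \<and> greenL m a b"

definition Hclass :: "nat \<Rightarrow> (nat \<Rightarrow> nat option) \<Rightarrow> (nat \<Rightarrow> nat option) set" where
  "Hclass m e = {a \<in> ORn m. greenH m a e}"

definition Hgroup :: "nat \<Rightarrow> (nat \<Rightarrow> nat option) \<Rightarrow> (nat \<Rightarrow> nat option) monoid" where
  "Hgroup m e = \<lparr>carrier = Hclass m e, mult = (\<lambda>a b. a \<circ>\<^sub>m b), one = e\<rparr>"

end

theory Submission
  imports Defs
begin

lemma ran_mapcomp: "ran (f \<circ>\<^sub>m g) \<subseteq> ran f"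
  by (auto simp: ran_def map_comp_def split: option.splits)

lemma dom_mapcomp: "dom (f \<circ>\<^sub>m g) \<subseteq> dom g"
  by (auto simp: dom_def map_comp_def split: option.splits)

lemma idem_id:
  assumes "inj_on e (dom e)" "e \<circ>\<^sub>m e = e"
  shows "e x = (if x \<in> dom e then Some x else None)"
proof (cases "x \<in> dom e")
  case True
  then obtain y where y: "e x = Some y" by auto
  have "(e \<circ>\<^sub>m e) x = e y" using y by simp
  hence ey: "e y = Some y" using assms(2) y by simp
  hence "y \<in> dom e" by auto
  hence "x = y" using assms(1) y ey True by (metis inj_onD)
  thus ?thesis using y True by simp
qed (auto simp: domIff)

lemma ran_idem:
  assumes "inj_on e (dom e)" "e \<circ>\<^sub>m e = e"
  shows "ran e = dom e"
proof -
  have "\<And>x. e x = (if x \<in> dom e then Some x else None)" using idem_id[OF assms] by blast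
  then show ?thesis unfolding ran_def by (auto split: if_splits)
qed

definition pinv :: "(nat \<Rightarrow> nat option) \<Rightarrow> nat \<Rightarrow> nat option" where
  "pinv a z = (if z \<in> ran a then Some (THE x. a x = Some z) else None)"

lemma pinv_iff:
  assumes "inj_on a (dom a)"
  shows "pinv a z = Some x \<longleftrightarrow> a x = Some z"
proof
  assume h: "a x = Some z"
  hence "z \<in> ran a" by (auto simp: ran_def)
  moreover have "(THE x. a x = Some z) = x"
    using assms h by (intro the_equality) (auto, metis domI inj_onD)
  ultimately show "pinv a z = Some x" by (simp add: pinv_def)
next
  assume h: "pinv a z = Some x"
  hence zr: "z \<in> ran a" and x: "x = (THE x. a x = Some z)" by (auto simp: pinv_def split: if_splits)
  from zr obtain y where y: "a y = Some z" by (auto simp: ran_def)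
  have "(THE x. a x = Some z) = y"
    using assms y by (intro the_equality) (auto, metis domI inj_onD)
  thus "a x = Some z" using x y by simp
qed

lemma dom_pinv: "dom (pinv a) = ran a"
  by (auto simp: pinv_def split: if_splits)

lemma ran_pinv: assumes "inj_on a (dom a)" shows "ran (pinv a) = dom a"
  using pinv_iff[OF assms] by (auto simp: ran_def dom_def)

lemma comp_pinv1: assumes "inj_on a (dom a)"
  shows "(a \<circ>\<^sub>m pinv a) z = (if z \<in> ran a then Some z else None)"
proof (cases "z \<in> ran a")
  case True
  then obtain x where "a x = Some z" by (auto simp: ran_def)
  then have "pinv a z = Some x" using pinv_iff[OF assms] by simp
  then show ?thesis using True \<open>a x = Some z\<close> by simp
next
  case False
  then have "pinv a z = None" by (simp add: pinv_def)
  then show ?thesis using False by simp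
qed

lemma comp_pinv2: assumes "inj_on a (dom a)"
  shows "(pinv a \<circ>\<^sub>m a) x = (if x \<in> dom a then Some x else None)"
proof (cases "x \<in> dom a")
  case True
  then obtain z where z: "a x = Some z" by auto
  then have "pinv a z = Some x" using pinv_iff[OF assms] by simp
  then show ?thesis using True z by simp
next
  case False
  then show ?thesis by (simp add: domIff)
qed

lemma card_swap:
  assumes "bij_betw f (L \<union> U) (L \<union> U)" "L \<inter> U = {}" "finite L" "finite U"
  shows "card (f ` L \<inter> U) = card (f ` U \<inter> L)"
proof -
  have inj: "inj_on f (L \<union> U)" and im: "f ` (L \<union> U) = L \<union> U" using assms(1) unfolding bij_betw_def by auto
  have cL: "card (f ` L) = card L" using inj by (meson card_image inj_on_subset sup_ge1)
  have fL: "f ` L \<subseteq> L \<union> U" "f ` U \<subseteq> L \<union> U" using im by blast+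
  have disj: "f ` L \<inter> f ` U = {}"
  proof (rule ccontr)
    assume "f ` L \<inter> f ` U \<noteq> {}"
    then obtain x y where "x \<in> L" "y \<in> U" "f x = f y" by auto
    then have "x = y" using inj by (auto dest: inj_onD)
    then show False using \<open>x \<in> L\<close> \<open>y \<in> U\<close> assms(2) by auto
  qed
  have "f ` L = (f ` L \<inter> U) \<union> (f ` L \<inter> L)" using fL by blast
  moreover have "(f ` L \<inter> U) \<inter> (f ` L \<inter> L) = {}" using assms(2) by blast
  ultimately have "card (f ` L) = card (f ` L \<inter> U) + card (f ` L \<inter> L)"
    using assms(3,4) by (metis card_Un_disjoint finite_Int finite_imageI)
  moreover have "card L = card (f ` U \<inter> L) + card (f ` L \<inter> L)"
  proof -
    have "L = (f ` U \<inter> L) \<union> (f ` L \<inter> L)" using im by (simp add: image_Un) blast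
    moreover have "(f ` U \<inter> L) \<inter> (f ` L \<inter> L) = {}" using disj by auto
    ultimately show ?thesis using assms(3)
      by (metis card_Un_disjoint finite_Int)
  qed
  ultimately show ?thesis using cL by simp
qed

lemma ORn_pinj: "s \<in> ORn m \<Longrightarrow> pinj (2*m) s"
  by (simp add: ORn_def)

lemma theta_N: "i \<in> {1..n} \<Longrightarrow> theta n i \<in> {1..n}"
  by (auto simp: theta_def)

lemma ran_card:
  assumes "inj_on a (dom a)" "finite (dom a)"
  shows "card (ran a) = card (dom a)"
proof -
  have "ran a = (\<lambda>x. the (a x)) ` dom a" by (force simp: ran_def dom_def)
  moreover have "inj_on (\<lambda>x. the (a x)) (dom a)"
    using assms(1) unfolding inj_on_def by (metis domIff option.collapse)
  ultimately show ?thesis by (simp add: card_image)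
qed

lemma pinv_pinj:
  assumes "pinj n a" shows "pinj n (pinv a)"
proof -
  have inj: "inj_on a (dom a)" using assms by (simp add: pinj_def)
  have "inj_on (pinv a) (dom (pinv a))"
  proof (rule inj_onI)
    fix x y assume x: "x \<in> dom (pinv a)" and "pinv a x = pinv a y"
    then obtain z where "pinv a x = Some z" "pinv a y = Some z" by (metis domD)
    then have "a z = Some x" "a z = Some y" using pinv_iff[OF inj] by auto
    then show "x = y" by simp
  qed
  then show ?thesis using assms unfolding pinj_def dom_pinv ran_pinv[OF inj] by blast
qed

lemma Wprime_pinv:
  assumes a: "a \<in> Wprime m" and ra: "ran a = {1..2*m}"
  shows "pinv a \<in> Wprime m"
proof -
  let ?N = "{1..2*m}" and ?L = "{1..m}" and ?U = "{m+1..2*m}"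
  have aW: "pinj (2*m) a" "dom a = ?N"
     "\<And>i. i \<in> ?N \<Longrightarrow> a (theta (2*m) i) = map_option (theta (2*m)) (a i)"
    and par: "even (card (ran (a |` ?L) \<inter> ?U))"
    using a by (auto simp: Wprime_def Wgrp_def)
  have inj: "inj_on a (dom a)" using aW(1) by (simp add: pinj_def)
  note pi = pinv_iff[OF inj]
  have pinjp: "pinj (2*m) (pinv a)" using pinv_pinj[OF aW(1)] .
  have domp: "dom (pinv a) = ?N" using ra by (simp add: dom_pinv)
  have sym: "pinv a (theta (2*m) i) = map_option (theta (2*m)) (pinv a i)" if i: "i \<in> ?N" for i
  proof -
    have "i \<in> ran a" using i ra by simp
    then obtain x where x: "a x = Some i" by (auto simp: ran_def)
    have xN: "x \<in> ?N" using x aW(2) by auto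
    have "a (theta (2*m) x) = Some (theta (2*m) i)" using aW(3)[OF xN] x by simp
    then have "pinv a (theta (2*m) i) = Some (theta (2*m) x)" using pi by simp
    moreover have "pinv a i = Some x" using pi x by simp
    ultimately show ?thesis by simp
  qed
  define f where "f x = the (a x)" for x
  have af: "a x = Some (f x)" if "x \<in> ?N" for x
    using that aW(2) unfolding f_def by (metis domIff option.collapse)
  have injf: "inj_on f ?N"
  proof (rule inj_onI)
    fix x y assume xy: "x \<in> ?N" "y \<in> ?N" "f x = f y"
    then have "a x = a y" using af[OF xy(1)] af[OF xy(2)] by simp
    moreover have "x \<in> dom a" "y \<in> dom a" using xy aW(2) by auto
    ultimately show "x = y" using inj_onD[OF inj] by blast
  qed
  have imf: "f ` ?N = ?N"
  proof -
    have "ran a = f ` ?N"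
    proof (intro equalityI subsetI)
      fix y assume "y \<in> ran a"
      then obtain x where x: "a x = Some y" by (auto simp: ran_def)
      then have xN: "x \<in> ?N" using aW(2) by blast
      then have "y = f x" using af[OF xN] x by simp
      then show "y \<in> f ` ?N" using xN by blast
    next
      fix y assume "y \<in> f ` ?N"
      then obtain x where x: "x \<in> ?N" "y = f x" by blast
      then have "a x = Some y" using af by simp
      then show "y \<in> ran a" by (auto simp: ran_def)
    qed
    then show ?thesis using ra by simp
  qed
  have NLU: "?N = ?L \<union> ?U" by auto
  have bij: "bij_betw f (?L \<union> ?U) (?L \<union> ?U)"
    using injf imf NLU by (simp add: bij_betw_def)
  have r1: "ran (a |` ?L) = f ` ?L"
  proof (intro equalityI subsetI)
    fix y assume "y \<in> ran (a |` ?L)"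
    then obtain x where "(a |` ?L) x = Some y" by (auto simp: ran_def)
    then have x: "x \<in> ?L" "a x = Some y" by (auto simp: restrict_map_def split: if_splits)
    then have "y = f x" using af by simp
    then show "y \<in> f ` ?L" using x by blast
  next
    fix y assume "y \<in> f ` ?L"
    then obtain x where x: "x \<in> ?L" "y = f x" by blast
    then have "(a |` ?L) x = Some y" using af by simp
    then show "y \<in> ran (a |` ?L)" by (auto simp: ran_def)
  qed
  have r2: "ran (pinv a |` ?L) = {x \<in> ?N. f x \<in> ?L}"
  proof -
    have "y \<in> ran (pinv a |` ?L) \<longleftrightarrow> (\<exists>z\<in>?L. a y = Some z)" for y
    proof -
      have "y \<in> ran (pinv a |` ?L) \<longleftrightarrow> (\<exists>z. (pinv a |` ?L) z = Some y)" by (simp add: ran_def)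
      also have "\<dots> \<longleftrightarrow> (\<exists>z\<in>?L. pinv a z = Some y)" by (auto simp: restrict_map_def split: if_splits)
      also have "\<dots> \<longleftrightarrow> (\<exists>z\<in>?L. a y = Some z)" using pi by simp
      finally show ?thesis .
    qed
    then have "ran (pinv a |` ?L) = {x. \<exists>z\<in>?L. a x = Some z}" by blast
    also have "\<dots> = {x \<in> ?N. f x \<in> ?L}"
    proof (intro equalityI subsetI)
      fix x assume "x \<in> {x. \<exists>z\<in>?L. a x = Some z}"
      then obtain z where z: "z \<in> ?L" "a x = Some z" by blast
      then have "x \<in> ?N" using aW(2) by blast
      then show "x \<in> {x \<in> ?N. f x \<in> ?L}" using af z by simp
    next
      fix x assume "x \<in> {x \<in> ?N. f x \<in> ?L}"
      then show "x \<in> {x. \<exists>z\<in>?L. a x = Some z}" using af by blast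
    qed
    finally show ?thesis .
  qed
  have "{x \<in> ?N. f x \<in> ?L} \<inter> ?U = {x \<in> ?U. f x \<in> ?L}" by auto
  moreover have "card {x \<in> ?U. f x \<in> ?L} = card (f ` ?U \<inter> ?L)"
  proof -
    have "f ` {x \<in> ?U. f x \<in> ?L} = f ` ?U \<inter> ?L" by auto
    moreover have "{x \<in> ?U. f x \<in> ?L} \<subseteq> ?N" by auto
    then have "inj_on f {x \<in> ?U. f x \<in> ?L}" using injf inj_on_subset by blast
    ultimately show ?thesis using card_image[of f "{x \<in> ?U. f x \<in> ?L}"] by simp
  qed
  moreover have "card (f ` ?L \<inter> ?U) = card (f ` ?U \<inter> ?L)"
  proof -
    have dj: "?L \<inter> ?U = {}" by auto
    show ?thesis using card_swap[OF bij dj finite_atLeastAtMost finite_atLeastAtMost] .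
  qed
  ultimately have cc: "card (ran (pinv a |` ?L) \<inter> ?U) = card (ran (a |` ?L) \<inter> ?U)"
    using r1 r2 by simp
  have "even (card (ran (pinv a |` ?L) \<inter> ?U))" using cc par by simp
  moreover have "pinv a \<in> Wgrp m" unfolding Wgrp_def using pinjp domp sym by blast
  ultimately show ?thesis unfolding Wprime_def by blast
qed

lemma pinv_ORn:
  assumes a: "a \<in> ORn m" and d: "dom a = ran a"
  shows "pinv a \<in> ORn m"
proof -
  have pj: "pinj (2*m) a" using a by (rule ORn_pinj)
  have inj: "inj_on a (dom a)" using pj by (simp add: pinj_def)
  note pi = pinv_iff[OF inj]
  have pinjp: "pinj (2*m) (pinv a)" using pinv_pinj[OF pj] .
  have dp: "dom (pinv a) = dom a" and rp: "ran (pinv a) = dom a"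
    using d dom_pinv ran_pinv[OF inj] by auto
  have rk: "rk (pinv a) = rk a" using dp by (simp add: rk_def)
  show ?thesis
  proof (cases "a \<in> Wprime m")
    case True
    have "dom a = {1..2*m}" using True by (simp add: Wprime_def Wgrp_def)
    then have "pinv a \<in> Wprime m" using Wprime_pinv[OF True] d by simp
    then show ?thesis using pinjp by (simp add: ORn_def)
  next
    case False
    then show ?thesis using a pinjp dp rp rk d by (auto simp: ORn_def)
  qed
qed

lemma H_char:
  assumes e: "e \<in> ORn m" "e \<circ>\<^sub>m e = e" and a: "a \<in> ORn m"
  shows "greenH m a e \<longleftrightarrow> dom a = dom e \<and> ran a = dom e"
proof -
  have inje: "inj_on e (dom e)" using ORn_pinj[OF e(1)] by (simp add: pinj_def)
  have inja: "inj_on a (dom a)" using ORn_pinj[OF a] by (simp add: pinj_def)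
  have re: "ran e = dom e" using ran_idem[OF inje e(2)] .
  have eid: "\<And>x. e x = (if x \<in> dom e then Some x else None)" using idem_id[OF inje e(2)] by blast
  show ?thesis
  proof
    assume "greenH m a e"
    then obtain x y x' y' where "e = a \<circ>\<^sub>m x" "a = e \<circ>\<^sub>m y" "e = x' \<circ>\<^sub>m a" "a = y' \<circ>\<^sub>m e"
      unfolding greenH_def greenR_def greenL_def by blast
    then have "ran e \<subseteq> ran a" "ran a \<subseteq> ran e" "dom e \<subseteq> dom a" "dom a \<subseteq> dom e"
      using ran_mapcomp dom_mapcomp by metis+
    then show "dom a = dom e \<and> ran a = dom e" using re by auto
  next
    assume h: "dom a = dom e \<and> ran a = dom e"
    have pa: "pinv a \<in> ORn m" using pinv_ORn[OF a] h by simp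
    have 1: "e = a \<circ>\<^sub>m pinv a"
      by (rule ext) (simp add: comp_pinv1[OF inja] eid h)
    have 2: "a = e \<circ>\<^sub>m a"
    proof (rule ext)
      fix x show "a x = (e \<circ>\<^sub>m a) x"
      proof (cases "a x")
        case (Some y)
        then have "y \<in> dom e" using h by (auto simp: ran_def)
        then show ?thesis using Some eid by simp
      qed simp
    qed
    have 3: "e = pinv a \<circ>\<^sub>m a"
      by (rule ext) (simp add: comp_pinv2[OF inja] eid h)
    have 4: "a = a \<circ>\<^sub>m e"
    proof (rule ext)
      fix x show "a x = (a \<circ>\<^sub>m e) x"
      proof (cases "x \<in> dom e")
        case True
        then show ?thesis using eid[of x] by simp
      next
        case False
        then have "a x = None" using h by auto
        then show ?thesis using eid[of x] False by simp
      qed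
    qed
    show "greenH m a e"
      unfolding greenH_def greenR_def greenL_def using 1 2 3 4 pa a by blast
  qed
qed

lemma Hclass_char:
  assumes e: "e \<in> ORn m" "e \<circ>\<^sub>m e = e"
  shows "Hclass m e = {a \<in> ORn m. dom a = dom e \<and> ran a = dom e}"
  using H_char[OF e] unfolding Hclass_def by blast

lemma Wprime_dom_ran:
  assumes "a \<in> Wprime m" shows "dom a = {1..2*m} \<and> ran a = {1..2*m}"
proof -
  have pj: "pinj (2*m) a" and d: "dom a = {1..2*m}" using assms by (auto simp: Wprime_def Wgrp_def)
  have "card (ran a) = card (dom a)" using pj d by (intro ran_card) (auto simp: pinj_def)
  moreover have "ran a \<subseteq> {1..2*m}" using pj by (simp add: pinj_def)
  ultimately show ?thesis using d by (metis card_subset_eq finite_atLeastAtMost)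
qed

lemma part1:
  assumes m: "m \<ge> 1" and e: "e \<in> ORn m" "e \<circ>\<^sub>m e = e" and rk: "rk e = 2*m"
  shows "Hclass m e = Wprime m"
proof -
  have pj: "pinj (2*m) e" using ORn_pinj[OF e(1)] .
  have de: "dom e = {1..2*m}"
    using pj rk unfolding pinj_def rk_def by (metis card_atLeastAtMost card_subset_eq diff_Suc_1 finite_atLeastAtMost plus_1_eq_Suc add.commute)
  have "a \<in> Wprime m" if h: "a \<in> Hclass m e" for a
  proof -
    have a: "a \<in> ORn m" "dom a = {1..2*m}" using Hclass_char[OF e] de h by auto
    then have "rk a = 2*m" by (simp add: rk_def)
    then show "a \<in> Wprime m" using a m by (auto simp: ORn_def)
  qed
  moreover have "a \<in> Hclass m e" if a: "a \<in> Wprime m" for a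
  proof -
    have "a \<in> ORn m" using a by (simp add: ORn_def Wprime_def Wgrp_def)
    then show "a \<in> Hclass m e" using Hclass_char[OF e] de Wprime_dom_ran[OF a] by auto
  qed
  ultimately show ?thesis by blast
qed

lemma part2:
  assumes m: "m \<ge> 1" and e: "e \<in> ORn m" "e \<circ>\<^sub>m e = e" and rk: "rk e = k"
    and k: "k \<in> {1..m}"
  shows "group (Hgroup m e) \<and> Hgroup m e \<cong> sym_group k"
proof -
  define D where "D = dom e"
  have pj: "pinj (2*m) e" using ORn_pinj[OF e(1)] .
  have DN: "D \<subseteq> {1..2*m}" using pj by (simp add: pinj_def D_def)
  have finD: "finite D" using DN finite_subset by blast
  have cD: "card D = k" using rk by (simp add: rk_def D_def)
  have notW: "e \<notin> Wprime m"
  proof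
    assume "e \<in> Wprime m"
    then have "D = {1..2*m}" using Wprime_dom_ran D_def by blast
    then show False using cD k m by simp
  qed
  have admD: "admissible (2*m) D" using e(1) notW by (auto simp: ORn_def D_def)
  have inORn: "a \<in> ORn m" if "pinj (2*m) a" "dom a = D" "ran a = D" for a
  proof -
    have "rk a = k" using that cD by (simp add: rk_def)
    then have "(rk a < m \<and> admissible (2*m) (dom a) \<and> admissible (2*m) (ran a)) \<or>
       (rk a = m \<and> admissible (2*m) (dom a) \<and> admissible (2*m) (ran a) \<and>
          (typeI m (dom a) \<longleftrightarrow> typeI m (ran a)))"
      using that(2,3) admD k by (cases "k < m") simp_all
    then show ?thesis using that(1) unfolding ORn_def by blast
  qed
  have Hc: "Hclass m e = {a. pinj (2*m) a \<and> dom a = D \<and> ran a = D}"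
  proof -
    have "Hclass m e = {a \<in> ORn m. dom a = D \<and> ran a = D}" using Hclass_char[OF e] D_def by simp
    also have "\<dots> = {a. pinj (2*m) a \<and> dom a = D \<and> ran a = D}"
    proof (intro equalityI subsetI)
      fix a assume "a \<in> {a \<in> ORn m. dom a = D \<and> ran a = D}"
      then show "a \<in> {a. pinj (2*m) a \<and> dom a = D \<and> ran a = D}" using ORn_pinj by blast
    next
      fix a assume "a \<in> {a. pinj (2*m) a \<and> dom a = D \<and> ran a = D}"
      then show "a \<in> {a \<in> ORn m. dom a = D \<and> ran a = D}" using inORn by blast
    qed
    finally show ?thesis .
  qed
  have eid: "\<And>x. e x = (if x \<in> D then Some x else None)"
    using idem_id[OF _ e(2)] pj unfolding pinj_def D_def by blast
  obtain f where f: "bij_betw f {1..k} D" using ex_bij_betw_nat_finite_1[OF finD] cD by auto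
  define g where "g = inv_into {1..k} f"
  have g: "bij_betw g D {1..k}" using f bij_betw_inv_into g_def by blast
  have fg: "\<And>x. x \<in> D \<Longrightarrow> f (g x) = x" using f g_def bij_betw_inv_into_right by fastforce
  have gf: "\<And>y. y \<in> {1..k} \<Longrightarrow> g (f y) = y" using f g_def bij_betw_inv_into_left by fastforce
  have fin: "\<And>y. y \<in> {1..k} \<Longrightarrow> f y \<in> D" using f bij_betwE by blast
  have gin: "\<And>x. x \<in> D \<Longrightarrow> g x \<in> {1..k}" using g bij_betwE by blast
  define \<phi> where "\<phi> p = (\<lambda>x. if x \<in> D then Some (f (p (g x))) else None)" for p :: "nat \<Rightarrow> nat"
  have pin: "p y \<in> {1..k}" if "p permutes {1..k}" "y \<in> {1..k}" for p y
    by (simp only: permutes_in_image[OF that(1)] that(2))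
  have carr: "\<phi> p \<in> Hclass m e" if p: "p permutes {1..k}" for p
  proof -
    have d: "dom (\<phi> p) = D" by (auto simp: \<phi>_def dom_def)
    have r: "ran (\<phi> p) = D"
    proof
      show "ran (\<phi> p) \<subseteq> D" using fin gin pin[OF p] by (auto simp: \<phi>_def ran_def split: if_splits)
      show "D \<subseteq> ran (\<phi> p)"
      proof
        fix z assume z: "z \<in> D"
        have "g z \<in> {1..k}" using gin z .
        then obtain y where y: "y \<in> {1..k}" "p y = g z"
          using p by (metis permutes_def)
        then have "f y \<in> D" using fin by blast
        moreover have "f (p (g (f y))) = z" using y gf fg z by simp
        ultimately show "z \<in> ran (\<phi> p)" unfolding ran_def \<phi>_def by (auto intro!: exI[of _ "f y"])
      qed
    qed
    have i: "inj_on (\<phi> p) (dom (\<phi> p))"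
    proof (rule inj_onI)
      fix x y assume "x \<in> dom (\<phi> p)" "y \<in> dom (\<phi> p)" "\<phi> p x = \<phi> p y"
      then have xy: "x \<in> D" "y \<in> D" "f (p (g x)) = f (p (g y))" using d by (auto simp: \<phi>_def)
      then have "p (g x) = p (g y)" using f pin[OF p] gin unfolding bij_betw_def by (meson inj_onD)
      then have "g x = g y" using p by (metis permutes_inj injD)
      then show "x = y" using fg xy by metis
    qed
    show ?thesis unfolding Hc using d r i DN by (auto simp: pinj_def)
  qed
  have hom: "\<phi> (p \<circ> q) = \<phi> p \<circ>\<^sub>m \<phi> q" if p: "p permutes {1..k}" and q: "q permutes {1..k}" for p q
  proof (rule ext)
    fix x show "\<phi> (p \<circ> q) x = (\<phi> p \<circ>\<^sub>m \<phi> q) x"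
    proof (cases "x \<in> D")
      case True
      then have "q (g x) \<in> {1..k}" using pin[OF q] gin by blast
      then show ?thesis using True fin gf by (simp add: \<phi>_def)
    qed (simp add: \<phi>_def)
  qed
  have injphi: "inj_on \<phi> {p. p permutes {1..k}}"
  proof (rule inj_onI)
    fix p q assume p: "p \<in> {p. p permutes {1..k}}" and q: "q \<in> {p. p permutes {1..k}}" and h: "\<phi> p = \<phi> q"
    show "p = q"
    proof (rule ext)
      fix y show "p y = q y"
      proof (cases "y \<in> {1..k}")
        case True
        have "\<phi> p (f y) = \<phi> q (f y)" using h by simp
        then have "f (p y) = f (q y)" using True fin gf by (simp add: \<phi>_def)
        moreover have "p y \<in> {1..k}" "q y \<in> {1..k}" using pin p q True by auto
        moreover have "inj_on f {1..k}" using f by (simp add: bij_betw_def)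
        ultimately show ?thesis using inj_onD by metis
      next
        case False
        then show ?thesis using p q by (simp add: permutes_def)
      qed
    qed
  qed
  have surj: "\<phi> ` {p. p permutes {1..k}} = Hclass m e"
  proof
    show "\<phi> ` {p. p permutes {1..k}} \<subseteq> Hclass m e" using carr by blast
    show "Hclass m e \<subseteq> \<phi> ` {p. p permutes {1..k}}"
    proof
      fix a assume "a \<in> Hclass m e"
      then have a: "pinj (2*m) a" "dom a = D" "ran a = D" using Hc by auto
      define h where "h x = the (a x)" for x
      have ah: "\<And>x. x \<in> D \<Longrightarrow> a x = Some (h x)" using a(2) h_def by auto
      have bh: "bij_betw h D D"
      proof -
        have "inj_on h D" unfolding inj_on_def using ah a(1,2) unfolding pinj_def by (metis inj_onD)
        moreover have "h ` D = D"
        proof -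
          have "ran a = h ` D" using ah a(2) by (force simp: ran_def)
          then show ?thesis using a(3) by simp
        qed
        ultimately show ?thesis by (simp add: bij_betw_def)
      qed
      define p where "p y = (if y \<in> {1..k} then g (h (f y)) else y)" for y
      have bp: "bij_betw (g \<circ> h \<circ> f) {1..k} {1..k}"
        using f bh g by (meson bij_betw_trans)
      have "bij_betw p {1..k} {1..k}"
        using bp by (rule bij_betw_cong[THEN iffD1, rotated]) (simp add: p_def)
      then have pp: "p permutes {1..k}"
        by (rule bij_imp_permutes) (auto simp: p_def)
      have "\<phi> p = a"
      proof (rule ext)
        fix x show "\<phi> p x = a x"
        proof (cases "x \<in> D")
          case True
          have "h x \<in> D" using bh True bij_betwE by blast
          then show ?thesis using True gin fg ah by (simp add: \<phi>_def p_def)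
        next
          case False
          then show ?thesis using a(2) by (auto simp: \<phi>_def)
        qed
      qed
      then show "a \<in> \<phi> ` {p. p permutes {1..k}}" using pp by blast
    qed
  qed
  have one: "\<phi> id = e" by (rule ext) (simp add: \<phi>_def eid fg)
  have homphi: "\<phi> \<in> hom (sym_group k) (Hgroup m e)"
    unfolding hom_def sym_group_def Hgroup_def using carr hom by auto
  have "group ((Hgroup m e) \<lparr> carrier := \<phi> ` (carrier (sym_group k)), one := \<phi> \<one>\<^bsub>sym_group k\<^esub> \<rparr>)"
    using group.hom_imp_img_group[OF sym_group_is_group homphi] .
  moreover have "(Hgroup m e) \<lparr> carrier := \<phi> ` (carrier (sym_group k)), one := \<phi> \<one>\<^bsub>sym_group k\<^esub> \<rparr> = Hgroup m e"
    using surj one by (simp add: sym_group_def Hgroup_def)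
  ultimately have G: "group (Hgroup m e)" by simp
  have "\<phi> \<in> iso (sym_group k) (Hgroup m e)"
    unfolding iso_def using homphi injphi surj
    by (simp add: bij_betw_def sym_group_def Hgroup_def)
  then have "sym_group k \<cong> Hgroup m e" by (rule is_isoI)
  then have "Hgroup m e \<cong> sym_group k" by (rule group.iso_sym[OF sym_group_is_group])
  then show ?thesis using G by simp
qed

theorem proposition3p5:
  fixes m k :: nat and e :: "nat \<Rightarrow> nat option"
  assumes "m \<ge> 1"
    and "e \<in> ORn m" and "e \<circ>\<^sub>m e = e" and "rk e = k"
  shows "(k = 2*m \<longrightarrow> Hclass m e = Wprime m)
       \<and> (k \<in> {1..m} \<longrightarrow> group (Hgroup m e) \<and> Hgroup m e \<cong> sym_group k)"
  using part1[OF assms(1-3)] part2[OF assms] assms(4) by blast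

end
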